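(* Let $T$ be any spanning tree of $G$ and let $\tau=\sum_{(i,j)\in T}\frac{r(i,j)}{R(C(i,j))}$ (which equals the total stretch $\mathrm{st}_T(G,\mathbf r)$ of $T$). Let $\epsilon>0$. After $K=\tau\ln(\frac{\tau}{\epsilon})$ iterations, the algorithm Dual KOSZ (run with the tree $T$) returns $\mathbf{x}^K\in\mathbb{R}^V$ and $\mathbf{f}^K\in\mathbb{R}^{\vec E}$ such that $$\mathbb{E}\|\mathbf{x}^*-\mathbf{x}^K\|_{\mathbf L}^2\le \frac{\epsilon}{\tau}\|\mathbf{x}^*\|_{\mathbf L}^2\quad\text{and}\quad \mathbb{E}[\mathcal{E}(\mathbf f^K)]\le(1+\epsilon)\mathcal{E}(\mathbf f^* ),$$ where $\mathbf f^*$ is the minimum-energy $\mathbf b$-flow and $\mathbf x^*$ is any maximizer of $\mathcal B$.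
   Context: $G=(V,E)$ is a connected undirected graph with $n$ vertices and $m$ edges, resistances $r(e)>0$, and $\vec E$ an arbitrary fixed orientation of $E$; for $(i,j)\in\vec E$ set $f(j,i)=-f(i,j)$. A supply vector $\mathbf b\in\mathbb R^V$ satisfies $\sum_i b(i)=0$. A $\mathbf b$-flow is $\mathbf f\in\mathbb R^{\vec E}$ with $\sum_{j:(i,j)\in\vec E}f(i,j)-\sum_{j:(j,i)\in\vec E}f(j,i)=b(i)$ for all $i$. Energy: $\mathcal E(\mathbf f)=\frac12\sum_{e}r(e)f(e)^2$; $\mathbf f^*$ minimizes $\mathcal E$ over $\mathbf b$-flows. $\mathbf L=\sum_{ij\in E}\frac1{r(i,j)}(\mathbf e_i-\mathbf e_j)(\mathbf e_i-\mathbf e_j)^\top$, $\|\mathbf y\|_{\mathbf L}^2=\mathbf y^\top\mathbf L\mathbf y$, $\mathcal B(\mathbf x)=\mathbf b^\top\mathbf x-\frac12\mathbf x^\top\mathbf L\mathbf x$, and $\mathbf x^*$ maximizes $\mathcal B$ (equivalently $\mathbf L\mathbf x^*=\mathbf b$). Stretch: $\mathrm{st}_T(G,\mathbf r)=\sum_{(i,j)\in\vec E}\frac1{r(i,j)}\sum_{(k,l)\in P(i,j)}r(k,l)$, $P(i,j)$ the tree path. Root $T$ arbitrarily and direct tree edges toward the root; for a tree edge $(i,j)$, $C(i,j)$ is the vertex set of the component of $T-ij$ containing $i$. For $C\subset V$: $\delta(C)$ is the set of edges with exactly one endpoint in $C$, $R(C)=(\sum_{e\in\delta(C)}1/r(e))^{-1}$,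 $b(C)=\sum_{v\in C}b(v)$, and for potentials $\mathbf x$, $f_{\mathbf x}(C)=\sum_{ij\in E,\,i\in C,\,j\notin C}\frac{x(i)-x(j)}{r(i,j)}$. The tree-defined flow $\mathbf f_{T,\mathbf x}$ has $f_{T,\mathbf x}(i,j)=\frac{x(i)-x(j)}{r(i,j)}$ on non-tree edges, and on tree edges the unique values making it a $\mathbf b$-flow. Dual KOSZ: set $\mathbf x^0=0$; in each iteration $t$, sample a tree edge $(i,j)$ with probability $P_{ij}=\frac1\tau\cdot\frac{r(i,j)}{R(C(i,j))}$ independently, let $C=C(i,j)$, $\Delta^t=(b(C)-f_{\mathbf x^t}(C))R(C)$, and set $x^{t+1}(v)=x^t(v)+\Delta^t$ for $v\in C$, $x^{t+1}(v)=x^t(v)$ otherwise. After $K$ iterations output $\mathbf x^K$ and $\mathbf f^K=\mathbf f_{T,\mathbf x^K}$. *)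

theory Defs
  imports Complex_Main
begin

text \<open>Graph: vertex set V, edge set E given by its fixed orientation (pairs (i,j)).
  Undirected reachability uses the symmetric closure.\<close>

definition reach :: "('v \<times> 'v) set \<Rightarrow> 'v \<Rightarrow> 'v \<Rightarrow> bool" where
  "reach F u w \<longleftrightarrow> (u, w) \<in> (F \<union> F\<inverse>)\<^sup>*"

definition connected_on :: "'v set \<Rightarrow> ('v \<times> 'v) set \<Rightarrow> bool" where
  "connected_on V F \<longleftrightarrow> (\<forall>u\<in>V. \<forall>w\<in>V. reach F u w)"

definition spanning_tree :: "'v set \<Rightarrow> ('v \<times> 'v) set \<Rightarrow> ('v \<times> 'v) set \<Rightarrow> bool" where
  "spanning_tree V E T \<longleftrightarrow> T \<subseteq> E \<and> connected_on V T \<and>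
     (\<forall>e\<in>T. \<not> reach (T - {e}) (fst e) (snd e))"

definition component :: "('v \<times> 'v) set \<Rightarrow> 'v \<Rightarrow> 'v set" where
  "component F v = {w. reach F v w}"

text \<open>C(e) for a tree edge e, with T rooted at rho and tree edges directed toward the root:
  the component of T - e not containing the root.\<close>
definition treeC :: "('v \<times> 'v) set \<Rightarrow> 'v \<Rightarrow> ('v \<times> 'v) \<Rightarrow> 'v set" where
  "treeC T rho e = (if rho \<in> component (T - {e}) (fst e)
                    then component (T - {e}) (snd e) else component (T - {e}) (fst e))"

definition cut :: "('v \<times> 'v) set \<Rightarrow> 'v set \<Rightarrow> ('v \<times> 'v) set" where
  "cut E C = {e \<in> E. (fst e \<in> C) \<noteq> (snd e \<in> C)}"

definition Rcut :: "('v \<times> 'v) set \<Rightarrow> ('v \<times> 'v \<Rightarrow> real) \<Rightarrow> 'v set \<Rightarrow> real" where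
  "Rcut E r C = 1 / (\<Sum>e\<in>cut E C. 1 / r e)"

definition bset :: "('v \<Rightarrow> real) \<Rightarrow> 'v set \<Rightarrow> real" where
  "bset b C = (\<Sum>v\<in>C. b v)"

definition cutflow :: "('v \<times> 'v) set \<Rightarrow> ('v \<times> 'v \<Rightarrow> real) \<Rightarrow> ('v \<Rightarrow> real) \<Rightarrow> 'v set \<Rightarrow> real" where
  "cutflow E r x C = (\<Sum>e\<in>cut E C.
      (if fst e \<in> C then x (fst e) - x (snd e) else x (snd e) - x (fst e)) / r e)"

definition tau :: "('v \<times> 'v) set \<Rightarrow> ('v \<times> 'v \<Rightarrow> real) \<Rightarrow> ('v \<times> 'v) set \<Rightarrow> 'v \<Rightarrow> real" where
  "tau E r T rho = (\<Sum>e\<in>T. r e / Rcut E r (treeC T rho e))"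

definition prob_edge :: "('v \<times> 'v) set \<Rightarrow> ('v \<times> 'v \<Rightarrow> real) \<Rightarrow> ('v \<times> 'v) set \<Rightarrow> 'v
    \<Rightarrow> ('v \<times> 'v) \<Rightarrow> real" where
  "prob_edge E r T rho e = (1 / tau E r T rho) * (r e / Rcut E r (treeC T rho e))"

definition dkosz_step :: "('v \<times> 'v) set \<Rightarrow> ('v \<times> 'v \<Rightarrow> real) \<Rightarrow> ('v \<Rightarrow> real) \<Rightarrow> ('v \<times> 'v) set
    \<Rightarrow> 'v \<Rightarrow> ('v \<Rightarrow> real) \<Rightarrow> ('v \<times> 'v) \<Rightarrow> ('v \<Rightarrow> real)" where
  "dkosz_step E r b T rho x e =
     (let C = treeC T rho e;
          \<Delta> = (bset b C - cutflow E r x C) * Rcut E r C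
      in (\<lambda>v. if v \<in> C then x v + \<Delta> else x v))"

text \<open>Expectation of g(x^k) when k iterations of Dual KOSZ are run from x, each
  iteration sampling a tree edge independently with probability prob_edge.\<close>
primrec dkosz_expect :: "('v \<times> 'v) set \<Rightarrow> ('v \<times> 'v \<Rightarrow> real) \<Rightarrow> ('v \<Rightarrow> real) \<Rightarrow> ('v \<times> 'v) set
    \<Rightarrow> 'v \<Rightarrow> nat \<Rightarrow> (('v \<Rightarrow> real) \<Rightarrow> real) \<Rightarrow> ('v \<Rightarrow> real) \<Rightarrow> real" where
  "dkosz_expect E r b T rho 0 g x = g x"
| "dkosz_expect E r b T rho (Suc k) g x =
     (\<Sum>e\<in>T. prob_edge E r T rho e * dkosz_expect E r b T rho k g (dkosz_step E r b T rho x e))"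

text \<open>Flows are functions on oriented edges (values off E are irrelevant except in tree_flow,
  where they are normalised to 0).\<close>
definition net_out :: "('v \<times> 'v) set \<Rightarrow> ('v \<times> 'v \<Rightarrow> real) \<Rightarrow> 'v \<Rightarrow> real" where
  "net_out E f v = (\<Sum>e\<in>{e\<in>E. fst e = v}. f e) - (\<Sum>e\<in>{e\<in>E. snd e = v}. f e)"

definition is_bflow :: "'v set \<Rightarrow> ('v \<times> 'v) set \<Rightarrow> ('v \<Rightarrow> real) \<Rightarrow> ('v \<times> 'v \<Rightarrow> real) \<Rightarrow> bool" where
  "is_bflow V E b f \<longleftrightarrow> (\<forall>v\<in>V. net_out E f v = b v)"

definition energy :: "('v \<times> 'v) set \<Rightarrow> ('v \<times> 'v \<Rightarrow> real) \<Rightarrow> ('v \<times> 'v \<Rightarrow> real) \<Rightarrow> real" where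
  "energy E r f = (1/2) * (\<Sum>e\<in>E. r e * (f e)\<^sup>2)"

definition Lnorm2 :: "('v \<times> 'v) set \<Rightarrow> ('v \<times> 'v \<Rightarrow> real) \<Rightarrow> ('v \<Rightarrow> real) \<Rightarrow> real" where
  "Lnorm2 E r y = (\<Sum>e\<in>E. (1 / r e) * (y (fst e) - y (snd e))\<^sup>2)"

definition Bfun :: "'v set \<Rightarrow> ('v \<times> 'v) set \<Rightarrow> ('v \<times> 'v \<Rightarrow> real) \<Rightarrow> ('v \<Rightarrow> real) \<Rightarrow> ('v \<Rightarrow> real) \<Rightarrow> real" where
  "Bfun V E r b x = (\<Sum>v\<in>V. b v * x v) - (1/2) * Lnorm2 E r x"

definition tree_flow :: "'v set \<Rightarrow> ('v \<times> 'v) set \<Rightarrow> ('v \<times> 'v \<Rightarrow> real) \<Rightarrow> ('v \<Rightarrow> real)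
    \<Rightarrow> ('v \<times> 'v) set \<Rightarrow> ('v \<Rightarrow> real) \<Rightarrow> ('v \<times> 'v \<Rightarrow> real)" where
  "tree_flow V E r b T x = (THE f. (\<forall>e. e \<notin> E \<longrightarrow> f e = 0) \<and>
      (\<forall>e\<in>E - T. f e = (x (fst e) - x (snd e)) / r e) \<and> is_bflow V E b f)"

end

theory Submission
  imports Defs
begin


lemma reach_refl[simp]: "reach F a a"
  by (simp add: reach_def)

lemma reach_sym: "reach F a b \<Longrightarrow> reach F b a"
proof -
  assume "reach F a b"
  then have "(b,a) \<in> ((F \<union> F\<inverse>)\<inverse>)\<^sup>*"
    unfolding reach_def by (simp add: rtrancl_converseI)
  moreover have "(F \<union> F\<inverse>)\<inverse> = F \<union> F\<inverse>" by auto
  ultimately show ?thesis unfolding reach_def by simp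
qed

lemma reach_trans: "reach F a b \<Longrightarrow> reach F b c \<Longrightarrow> reach F a c"
  unfolding reach_def by simp

lemma reach_edge: "(a,b) \<in> F \<Longrightarrow> reach F a b"
  unfolding reach_def by auto

lemma reach_closed:
  assumes "F \<subseteq> V \<times> V" "v \<in> V" "reach F v w" shows "w \<in> V"
proof -
  have "(v,w) \<in> (F \<union> F\<inverse>)\<^sup>*" using assms(3) unfolding reach_def .
  then show ?thesis
    by (induction rule: rtrancl_induct) (use assms(1,2) in auto)
qed

lemma reach_insert:
  assumes "reach (insert (u,w) F) a z"
  shows "reach F a z \<or> (reach F a u \<and> reach F w z) \<or> (reach F a w \<and> reach F u z)"
proof -
  have "(a,z) \<in> (insert (u,w) F \<union> (insert (u,w) F)\<inverse>)\<^sup>*" using assms unfolding reach_def .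
  then show ?thesis
  proof (induction rule: rtrancl_induct)
    case base
    then show ?case by simp
  next
    case (step y z)
    from step.hyps(2) have "(y,z) \<in> F \<union> F\<inverse> \<or> (y = u \<and> z = w) \<or> (y = w \<and> z = u)" by blast
    then show ?case
    proof (elim disjE)
      assume "(y,z) \<in> F \<union> F\<inverse>"
      then have r: "reach F y z" unfolding reach_def by blast
      from step.IH show ?thesis
      proof (elim disjE conjE)
        assume "reach F a y" then show ?thesis using reach_trans[OF _ r] by blast
      next
        assume "reach F a u" "reach F w y" then show ?thesis using reach_trans[OF _ r] by blast
      next
        assume "reach F a w" "reach F u y" then show ?thesis using reach_trans[OF _ r] by blast
      qed
    next
      assume yz: "y = u \<and> z = w"
      from step.IH have "reach F a u \<or> reach F a w" using yz by blast
      then show ?thesis using yz reach_refl[of F w] by blast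
    next
      assume yz: "y = w \<and> z = u"
      from step.IH have "reach F a u \<or> reach F a w" using yz by blast
      then show ?thesis using yz reach_refl[of F u] by blast
    qed
  qed
qed

lemma reach_mono: "F \<subseteq> G \<Longrightarrow> reach F a b \<Longrightarrow> reach G a b"
  unfolding reach_def by (meson Un_mono converse_mono rtrancl_mono subsetD)

lemma reach_insert_iff:
  "reach (insert (u,w) F) a z \<longleftrightarrow>
     reach F a z \<or> (reach F a u \<and> reach F w z) \<or> (reach F a w \<and> reach F u z)"
proof
  assume "reach (insert (u,w) F) a z" then show "reach F a z \<or> (reach F a u \<and> reach F w z) \<or> (reach F a w \<and> reach F u z)"
    by (rule reach_insert)
next
  have m: "reach F x y \<Longrightarrow> reach (insert (u,w) F) x y" for x y
    by (rule reach_mono[of F]) auto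
  have uw: "reach (insert (u,w) F) u w" by (rule reach_edge) simp
  assume "reach F a z \<or> (reach F a u \<and> reach F w z) \<or> (reach F a w \<and> reach F u z)"
  moreover have wu: "reach (insert (u,w) F) w u" by (rule reach_sym[OF uw])
  ultimately show "reach (insert (u,w) F) a z"
  proof (elim disjE conjE)
    assume "reach F a z" then show ?thesis by (rule m)
  next
    assume h: "reach F a u" "reach F w z" show ?thesis by (rule reach_trans[OF reach_trans[OF m[OF h(1)] uw] m[OF h(2)]])
  next
    assume h: "reach F a w" "reach F u z" show ?thesis by (rule reach_trans[OF reach_trans[OF m[OF h(1)] wu] m[OF h(2)]])
  qed
qed

lemma reach_insert_same:
  assumes "reach F u w" shows "reach (insert (u,w) F) a z \<longleftrightarrow> reach F a z"
proof -
  have "reach F a u \<and> reach F w z \<Longrightarrow> reach F a z" using reach_trans[OF reach_trans[OF _ assms]] by (elim conjE)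
  moreover have "reach F a w \<and> reach F u z \<Longrightarrow> reach F a z" using reach_trans[OF reach_trans[OF _ reach_sym[OF assms]]] by (elim conjE)
  ultimately show ?thesis using reach_insert_iff[of u w F a z] by blast
qed

lemma net_out_insert:
  assumes "finite F" "e \<notin> F"
  shows "net_out (insert e F) h v = net_out F h v + (if fst e = v then h e else 0) - (if snd e = v then h e else 0)"
proof -
  have 1: "{x \<in> insert e F. fst x = v} = (if fst e = v then insert e {x \<in> F. fst x = v} else {x \<in> F. fst x = v})" by auto
  have 2: "{x \<in> insert e F. snd x = v} = (if snd e = v then insert e {x \<in> F. snd x = v} else {x \<in> F. snd x = v})" by auto
  show ?thesis unfolding net_out_def 1 2 using assms by auto
qed

lemma net_out_cong: "(\<And>e. e \<in> F \<Longrightarrow> f e = g e) \<Longrightarrow> net_out F f v = net_out F g v"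
  unfolding net_out_def by (metis (mono_tags, lifting) mem_Collect_eq sum.cong)

lemma net_out_split:
  assumes "finite E" "T \<subseteq> E"
  shows "net_out E f v = net_out T f v + net_out (E - T) f v"
proof -
  have fT: "finite T" using assms finite_subset by blast
  have s1: "{e\<in>E. fst e = v} = {e\<in>T. fst e = v} \<union> {e\<in>E-T. fst e = v}" using assms by auto
  have s2: "{e\<in>E. snd e = v} = {e\<in>T. snd e = v} \<union> {e\<in>E-T. snd e = v}" using assms by auto
  have a: "(\<Sum>e\<in>{e\<in>E. fst e = v}. f e) = (\<Sum>e\<in>{e\<in>T. fst e = v}. f e) + (\<Sum>e\<in>{e\<in>E-T. fst e = v}. f e)"
    unfolding s1 by (rule sum.union_disjoint) (use assms fT in auto)
  have b: "(\<Sum>e\<in>{e\<in>E. snd e = v}. f e) = (\<Sum>e\<in>{e\<in>T. snd e = v}. f e) + (\<Sum>e\<in>{e\<in>E-T. snd e = v}. f e)"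
    unfolding s2 by (rule sum.union_disjoint) (use assms fT in auto)
  show ?thesis unfolding net_out_def a b by simp
qed

lemma sum_fst_group:
  assumes "finite E" "finite C"
  shows "(\<Sum>v\<in>C. \<Sum>e\<in>{e\<in>E. fst e = v}. f e) = (\<Sum>e\<in>{e\<in>E. fst e \<in> C}. f e)"
proof -
  have "(\<Sum>v\<in>C. \<Sum>e\<in>{e\<in>{e\<in>E. fst e \<in> C}. fst e = v}. f e) = (\<Sum>e\<in>{e\<in>E. fst e \<in> C}. f e)"
    by (rule sum.group) (use assms in auto)
  moreover have "\<And>v. v \<in> C \<Longrightarrow> {e\<in>{e\<in>E. fst e \<in> C}. fst e = v} = {e\<in>E. fst e = v}" by auto
  ultimately show ?thesis by simp
qed

lemma sum_snd_group:
  assumes "finite E" "finite C"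
  shows "(\<Sum>v\<in>C. \<Sum>e\<in>{e\<in>E. snd e = v}. f e) = (\<Sum>e\<in>{e\<in>E. snd e \<in> C}. f e)"
proof -
  have "(\<Sum>v\<in>C. \<Sum>e\<in>{e\<in>{e\<in>E. snd e \<in> C}. snd e = v}. f e) = (\<Sum>e\<in>{e\<in>E. snd e \<in> C}. f e)"
    by (rule sum.group) (use assms in auto)
  moreover have "\<And>v. v \<in> C \<Longrightarrow> {e\<in>{e\<in>E. snd e \<in> C}. snd e = v} = {e\<in>E. snd e = v}" by auto
  ultimately show ?thesis by simp
qed

lemma cut_sum:
  assumes "finite E" "finite C"
  shows "(\<Sum>v\<in>C. net_out E f v) = (\<Sum>e\<in>cut E C. if fst e \<in> C then f e else - f e)"
proof -
  have "(\<Sum>v\<in>C. net_out E f v) = (\<Sum>e\<in>{e\<in>E. fst e \<in> C}. f e) - (\<Sum>e\<in>{e\<in>E. snd e \<in> C}. f e)"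
    unfolding net_out_def sum_subtractf sum_fst_group[OF assms] sum_snd_group[OF assms] ..
  also have "\<dots> = (\<Sum>e\<in>E. (if fst e \<in> C then f e else 0) - (if snd e \<in> C then f e else 0))"
    using assms by (simp add: sum.inter_filter sum_subtractf)
  also have "\<dots> = (\<Sum>e\<in>E. if (fst e \<in> C) \<noteq> (snd e \<in> C) then (if fst e \<in> C then f e else - f e) else 0)"
    by (rule sum.cong) auto
  also have "\<dots> = (\<Sum>e\<in>cut E C. if fst e \<in> C then f e else - f e)"
    unfolding cut_def by (rule sum.inter_filter[OF assms(1), symmetric])
  finally show ?thesis .
qed

lemma weighted_sum:
  assumes "finite E" "finite V" "E \<subseteq> V \<times> V"
  shows "(\<Sum>v\<in>V. x v * net_out E f v) = (\<Sum>e\<in>E. f e * (x (fst e) - x (snd e)))"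
proof -
  have 1: "(\<Sum>v\<in>V. x v * (\<Sum>e\<in>{e\<in>E. fst e = v}. f e)) = (\<Sum>v\<in>V. \<Sum>e\<in>{e\<in>E. fst e = v}. x (fst e) * f e)"
    by (auto simp: sum_distrib_left intro!: sum.cong)
  have 2: "(\<Sum>v\<in>V. x v * (\<Sum>e\<in>{e\<in>E. snd e = v}. f e)) = (\<Sum>v\<in>V. \<Sum>e\<in>{e\<in>E. snd e = v}. x (snd e) * f e)"
    by (auto simp: sum_distrib_left intro!: sum.cong)
  have "(\<Sum>v\<in>V. x v * net_out E f v) = (\<Sum>v\<in>V. x v * (\<Sum>e\<in>{e\<in>E. fst e = v}. f e)) - (\<Sum>v\<in>V. x v * (\<Sum>e\<in>{e\<in>E. snd e = v}. f e))"
    unfolding net_out_def right_diff_distrib sum_subtractf ..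
  also have "\<dots> = (\<Sum>e\<in>{e\<in>E. fst e \<in> V}. x (fst e) * f e) - (\<Sum>e\<in>{e\<in>E. snd e \<in> V}. x (snd e) * f e)"
    unfolding 1 2 sum_fst_group[OF assms(1,2)] sum_snd_group[OF assms(1,2)] ..
  also have "{e\<in>E. fst e \<in> V} = E" using assms(3) by auto
  also have "{e\<in>E. snd e \<in> V} = E" using assms(3) by auto
  finally show ?thesis by (simp add: sum_subtractf algebra_simps)
qed




lemma reach_empty: "reach {} v w \<longleftrightarrow> v = w"
  unfolding reach_def by simp


lemma flow_exists_gen:
  assumes "finite F" "F \<subseteq> V \<times> V" "finite V"
    and "\<forall>v\<in>V. (\<Sum>w\<in>{w\<in>V. reach F v w}. c w) = (0::real)"
  shows "\<exists>g. \<forall>v\<in>V. net_out F g v = c v"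
  using assms
proof (induction F arbitrary: c rule: finite_induct)
  case empty
  have "c v = 0" if "v \<in> V" for v
  proof -
    have "{w\<in>V. reach {} v w} = {v}" using that by (auto simp: reach_empty)
    then show ?thesis using empty.prems(3) that by auto
  qed
  then show ?case by (intro exI[of _ "\<lambda>_. 0"]) (simp add: net_out_def)
next
  case (insert e F)
  obtain u w where e: "e = (u,w)" by (cases e)
  have uV: "u \<in> V" and wV: "w \<in> V" using insert.prems(1) e by auto
  have FV: "F \<subseteq> V \<times> V" using insert.prems(1) by auto
  show ?case
  proof (cases "reach F u w")
    case True
    have "\<forall>v\<in>V. (\<Sum>w\<in>{w\<in>V. reach F v w}. c w) = 0"
      using insert.prems(3) unfolding e reach_insert_same[OF True] .
    then obtain g where g: "\<forall>v\<in>V. net_out F g v = c v" using insert.IH[OF FV insert.prems(2)] by blast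
    define g' where "g' = g(e := 0)"
    have "net_out (insert e F) g' v = c v" if "v \<in> V" for v
    proof -
      have "net_out F g' v = net_out F g v" by (rule net_out_cong) (use insert.hyps(2) in \<open>auto simp: g'_def\<close>)
      then show ?thesis using net_out_insert[OF insert.hyps, of g' v] g that by (simp add: g'_def)
    qed
    then show ?thesis by blast
  next
    case False
    define S where "S = (\<Sum>z\<in>{z\<in>V. reach F u z}. c z)"
    define c' where "c' = (\<lambda>z. c z - (if z = u then S else 0) + (if z = w then S else 0))"
    have sumc': "(\<Sum>z\<in>A. c' z) = (\<Sum>z\<in>A. c z) - (if u \<in> A then S else 0) + (if w \<in> A then S else 0)"
      if "finite A" for A
      unfolding c'_def using that by (simp add: sum.distrib sum_subtractf sum.delta)
    have hyp: "\<forall>v\<in>V. (\<Sum>z\<in>{z\<in>V. reach F v z}. c' z) = 0"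
    proof
      fix v assume vV: "v \<in> V"
      let ?A = "{z\<in>V. reach F v z}"
      have fA: "finite ?A" using insert.prems(2) by simp
      have hv: "(\<Sum>z\<in>{z\<in>V. reach (insert (u,w) F) v z}. c z) = 0"
        using insert.prems(3) vV e by simp
      show "(\<Sum>z\<in>?A. c' z) = 0"
      proof (cases "reach F v u")
        case vu: True
        have "reach F v z \<longleftrightarrow> reach F u z" for z
          using reach_trans[OF reach_sym[OF vu], of z] reach_trans[OF vu, of z] by blast
        then have "?A = {z\<in>V. reach F u z}" by simp
        moreover have "w \<notin> ?A" using False reach_trans[OF reach_sym[OF vu], of w] by blast
        moreover have "u \<in> ?A" using vu uV by blast
        ultimately have "(\<Sum>z\<in>?A. c' z) = (\<Sum>z\<in>?A. c z) - S" using sumc'[OF fA] by auto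
        moreover have "(\<Sum>z\<in>?A. c z) = S" unfolding S_def using \<open>?A = {z\<in>V. reach F u z}\<close> by simp
        ultimately show ?thesis by simp
      next
        case nvu: False
        show ?thesis
        proof (cases "reach F v w")
          case vw: True
          have "reach F v z \<longleftrightarrow> reach F w z" for z
            using reach_trans[OF reach_sym[OF vw], of z] reach_trans[OF vw, of z] by blast
          then have Aw: "?A = {z\<in>V. reach F w z}" by simp
          have "u \<notin> ?A" using nvu by blast
          moreover have "w \<in> ?A" using vw wV by blast
          moreover have "(\<Sum>z\<in>{z\<in>V. reach F w z}. c z) = - S"
          proof -
            have hw: "(\<Sum>z\<in>{z\<in>V. reach (insert (u,w) F) w z}. c z) = 0"
              using insert.prems(3) wV e by simp
            have nwu: "\<not> reach F w u" using False reach_sym[of F w u] by blast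
            have "{z\<in>V. reach (insert (u,w) F) w z} = {z\<in>V. reach F w z} \<union> {z\<in>V. reach F u z}"
              using nwu by (auto simp: reach_insert_iff)
            moreover have "{z\<in>V. reach F w z} \<inter> {z\<in>V. reach F u z} = {}"
              using False reach_trans[OF _ reach_sym, of F u _ w] by blast
            ultimately have "(\<Sum>z\<in>{z\<in>V. reach F w z}. c z) + S = 0"
              using hw insert.prems(2) unfolding S_def by (simp add: sum.union_disjoint)
            then show ?thesis by simp
          qed
          ultimately show ?thesis using sumc'[OF fA] Aw by auto
        next
          case nvw: False
          have "{z\<in>V. reach (insert (u,w) F) v z} = ?A"
            using nvu nvw by (auto simp: reach_insert_iff)
          moreover have "u \<notin> ?A" "w \<notin> ?A" using nvu nvw by auto
          ultimately show ?thesis using sumc'[OF fA] hv by auto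
        qed
      qed
    qed
    obtain g where g: "\<forall>v\<in>V. net_out F g v = c' v" using insert.IH[OF FV insert.prems(2) hyp] by blast
    define g' where "g' = g(e := S)"
    have "net_out (insert e F) g' v = c v" if "v \<in> V" for v
    proof -
      have "net_out F g' v = net_out F g v" by (rule net_out_cong) (use insert.hyps(2) in \<open>auto simp: g'_def\<close>)
      then show ?thesis using net_out_insert[OF insert.hyps, of g' v] g that e
        by (auto simp: g'_def c'_def)
    qed
    then show ?thesis by blast
  qed
qed




definition pflow :: "('v \<times> 'v \<Rightarrow> real) \<Rightarrow> ('v \<Rightarrow> real) \<Rightarrow> 'v \<times> 'v \<Rightarrow> real" where
  "pflow r x e = (x (fst e) - x (snd e)) / r e"

definition sgnC :: "'v set \<Rightarrow> 'v \<times> 'v \<Rightarrow> real" where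
  "sgnC C e = (if fst e \<in> C then 1 else -1)"

lemma sum_net_out_all:
  assumes "finite F" "finite V" "F \<subseteq> V \<times> V"
  shows "(\<Sum>v\<in>V. net_out F h v) = 0"
proof -
  have "cut F V = {}" using assms(3) unfolding cut_def by auto
  then show ?thesis using cut_sum[OF assms(1,2), of h] by simp
qed

locale tsetting =
  fixes V :: "'v set" and E T :: "('v \<times> 'v) set" and r :: "'v \<times> 'v \<Rightarrow> real"
    and b :: "'v \<Rightarrow> real" and rho :: 'v
  assumes finV: "finite V"
    and EV: "E \<subseteq> V \<times> V"
    and rpos: "\<forall>e\<in>E. r e > 0"
    and bsum: "(\<Sum>v\<in>V. b v) = 0"
    and tree: "spanning_tree V E T"
begin

lemma finE: "finite E"
  using finite_subset[OF EV] finV by blast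

lemma TE: "T \<subseteq> E" using tree unfolding spanning_tree_def by blast

lemma finT: "finite T" using finite_subset[OF TE finE] .

lemma TV: "T \<subseteq> V \<times> V" using TE EV by blast

lemma connT: "u \<in> V \<Longrightarrow> w \<in> V \<Longrightarrow> reach T u w"
  using tree unfolding spanning_tree_def connected_on_def by blast

lemma acyc: "e \<in> T \<Longrightarrow> \<not> reach (T - {e}) (fst e) (snd e)"
  using tree unfolding spanning_tree_def by blast

lemma treeC_cases:
  "treeC T rho e = component (T - {e}) (fst e) \<or> treeC T rho e = component (T - {e}) (snd e)"
  unfolding treeC_def by auto

lemma treeC_V:
  assumes "e \<in> T" shows "treeC T rho e \<subseteq> V"
proof -
  have ab: "fst e \<in> V" "snd e \<in> V" using assms TV by auto
  have TeV: "T - {e} \<subseteq> V \<times> V" using TV by blast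
  have "component (T - {e}) a \<subseteq> V" if "a \<in> V" for a
    using reach_closed[OF TeV that] unfolding component_def by blast
  then show ?thesis using treeC_cases[of e] ab by metis
qed

lemma treeC_fin: "e \<in> T \<Longrightarrow> finite (treeC T rho e)"
  using treeC_V finite_subset finV by blast

lemma treeC_sep:
  assumes "e \<in> T" shows "(fst e \<in> treeC T rho e) \<noteq> (snd e \<in> treeC T rho e)"
proof -
  have n1: "\<not> reach (T - {e}) (fst e) (snd e)" using acyc[OF assms] .
  have n2: "\<not> reach (T - {e}) (snd e) (fst e)" using n1 reach_sym[of "T - {e}" "snd e" "fst e"] by blast
  have a: "fst e \<in> component (T - {e}) (fst e)" "snd e \<notin> component (T - {e}) (fst e)"
    using n1 unfolding component_def by auto
  have b: "snd e \<in> component (T - {e}) (snd e)" "fst e \<notin> component (T - {e}) (snd e)"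
    using n2 unfolding component_def by auto
  show ?thesis using treeC_cases[of e] a b by metis
qed

lemma treeC_other:
  assumes "e \<in> T" "e' \<in> T" "e' \<noteq> e"
  shows "(fst e' \<in> treeC T rho e) = (snd e' \<in> treeC T rho e)"
proof -
  have r: "reach (T - {e}) (fst e') (snd e')" using assms by (intro reach_edge) auto
  have r': "reach (T - {e}) (snd e') (fst e')" using reach_sym[OF r] .
  have "reach (T - {e}) a (fst e') = reach (T - {e}) a (snd e')" for a
    using reach_trans[OF _ r, of a] reach_trans[OF _ r', of a] by blast
  then show ?thesis using treeC_cases[of e] unfolding component_def by auto
qed

lemma e_in_cut: "e \<in> T \<Longrightarrow> e \<in> cut E (treeC T rho e)"
  using treeC_sep TE unfolding cut_def by blast

lemma cut_tree: "e \<in> T \<Longrightarrow> e' \<in> cut E (treeC T rho e) \<Longrightarrow> e' \<noteq> e \<Longrightarrow> e' \<notin> T"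
  using treeC_other unfolding cut_def by blast

lemma cut_fin: "finite (cut E C)" unfolding cut_def using finE by simp

lemma cut_single:
  assumes "e \<in> T" "\<And>e'. e' \<in> E - T \<Longrightarrow> h e' = 0"
  shows "(\<Sum>e'\<in>cut E (treeC T rho e). h e') = h e"
proof -
  have "(\<Sum>e'\<in>cut E (treeC T rho e). h e') = h e + (\<Sum>e'\<in>cut E (treeC T rho e) - {e}. h e')"
    using sum.remove[OF cut_fin e_in_cut[OF assms(1)]] .
  moreover have "(\<Sum>e'\<in>cut E (treeC T rho e) - {e}. h e') = 0"
    using assms(2) cut_tree[OF assms(1)] unfolding cut_def by (auto intro!: sum.neutral)
  ultimately show ?thesis by simp
qed

lemma net_out_diff: "net_out F (\<lambda>e. f e - g e) v = net_out F f v - net_out F g v"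
  unfolding net_out_def by (simp add: sum_subtractf)

definition tfP where
  "tfP x f \<longleftrightarrow> (\<forall>e. e \<notin> E \<longrightarrow> f e = 0) \<and> (\<forall>e\<in>E - T. f e = (x (fst e) - x (snd e)) / r e) \<and> is_bflow V E b f"

lemma tf_ex: "\<exists>f. tfP x f"
proof -
  define c where "c v = b v - net_out (E - T) (pflow r x) v" for v
  have ET: "E - T \<subseteq> V \<times> V" using EV by blast
  have "(\<Sum>v\<in>V. c v) = 0"
    unfolding c_def sum_subtractf bsum using sum_net_out_all[OF _ finV ET] finE by simp
  moreover have "{w\<in>V. reach T v w} = V" if "v \<in> V" for v using connT that by blast
  ultimately have "\<forall>v\<in>V. (\<Sum>w\<in>{w\<in>V. reach T v w}. c w) = 0" by simp
  then obtain g where g: "\<forall>v\<in>V. net_out T g v = c v"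
    using flow_exists_gen[OF finT TV finV] by blast
  define f where "f e = (if e \<in> T then g e else if e \<in> E then pflow r x e else 0)" for e
  have "net_out E f v = b v" if "v \<in> V" for v
  proof -
    have "net_out E f v = net_out T f v + net_out (E - T) f v" by (rule net_out_split[OF finE TE])
    also have "net_out T f v = net_out T g v" by (rule net_out_cong) (simp add: f_def)
    also have "net_out (E - T) f v = net_out (E - T) (pflow r x) v" by (rule net_out_cong) (simp add: f_def)
    finally show ?thesis using g that unfolding c_def by simp
  qed
  then have "tfP x f" unfolding tfP_def is_bflow_def using TE by (auto simp: f_def pflow_def)
  then show ?thesis by blast
qed

lemma tf_uniq:
  assumes "tfP x f1" "tfP x f2" shows "f1 = f2"
proof
  fix e
  show "f1 e = f2 e"
  proof (cases "e \<in> T")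
    case False
    show ?thesis
    proof (cases "e \<in> E")
      case True
      then show ?thesis using assms \<open>e \<notin> T\<close> unfolding tfP_def by simp
    next
      case False
      then have "f1 e = 0" "f2 e = 0" using assms unfolding tfP_def by blast+
      then show ?thesis by simp
    qed
  next
    case True
    define h where "h e' = f1 e' - f2 e'" for e'
    have h0: "net_out E h v = 0" if "v \<in> V" for v
      using assms that unfolding tfP_def is_bflow_def h_def net_out_diff by simp
    let ?C = "treeC T rho e"
    have "(\<Sum>v\<in>?C. net_out E h v) = 0" using h0 treeC_V[OF True] by (auto intro!: sum.neutral)
    then have "(\<Sum>e'\<in>cut E ?C. if fst e' \<in> ?C then h e' else - h e') = 0"
      using cut_sum[OF finE treeC_fin[OF True]] by simp
    moreover have "(\<Sum>e'\<in>cut E ?C. if fst e' \<in> ?C then h e' else - h e') = (if fst e \<in> ?C then h e else - h e)"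
      by (rule cut_single[OF True]) (use assms in \<open>auto simp: tfP_def h_def\<close>)
    ultimately have "h e = 0" by (auto split: if_splits)
    then show ?thesis by (simp add: h_def)
  qed
qed

lemma tf_props: "tfP x (tree_flow V E r b T x)"
proof -
  have "\<exists>!f. tfP x f" using tf_ex tf_uniq by blast
  then have "tfP x (THE f. tfP x f)" by (rule theI')
  moreover have "tree_flow V E r b T x = (THE f. tfP x f)" unfolding tree_flow_def tfP_def ..
  ultimately show ?thesis by simp
qed

end



context tsetting begin

lemma gap_identity:
  assumes "is_bflow V E b f"
  shows "energy E r f - Bfun V E r b x = (1/2) * (\<Sum>e\<in>E. r e * (f e - pflow r x e)\<^sup>2)"
proof -
  have "(\<Sum>v\<in>V. b v * x v) = (\<Sum>v\<in>V. x v * net_out E f v)"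
    using assms unfolding is_bflow_def by (auto intro!: sum.cong)
  also have "\<dots> = (\<Sum>e\<in>E. f e * (x (fst e) - x (snd e)))" by (rule weighted_sum[OF finE finV EV])
  finally have bx: "(\<Sum>v\<in>V. b v * x v) = (\<Sum>e\<in>E. f e * (x (fst e) - x (snd e)))" .
  have pe: "(1/2) * (r e * (f e)\<^sup>2) - f e * (x (fst e) - x (snd e)) + (1/2) * ((1 / r e) * (x (fst e) - x (snd e))\<^sup>2)
      = (1/2) * (r e * (f e - pflow r x e)\<^sup>2)" if "e \<in> E" for e
  proof -
    have "r e > 0" using rpos that by blast
    then show ?thesis unfolding pflow_def by (simp add: field_simps power2_eq_square)
  qed
  have "energy E r f - Bfun V E r b x =
      (\<Sum>e\<in>E. (1/2) * (r e * (f e)\<^sup>2) - f e * (x (fst e) - x (snd e)) + (1/2) * ((1 / r e) * (x (fst e) - x (snd e))\<^sup>2))"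
    unfolding energy_def Bfun_def Lnorm2_def bx
    by (simp add: sum.distrib sum_subtractf sum_distrib_left)
  also have "\<dots> = (\<Sum>e\<in>E. (1/2) * (r e * (f e - pflow r x e)\<^sup>2))"
    by (rule sum.cong) (use pe in auto)
  finally show ?thesis by (simp add: sum_distrib_left)
qed

lemma weak_duality:
  assumes "is_bflow V E b f" shows "Bfun V E r b x \<le> energy E r f"
proof -
  have "0 \<le> (\<Sum>e\<in>E. r e * (f e - pflow r x e)\<^sup>2)"
    using rpos by (intro sum_nonneg) (simp add: less_imp_le)
  then show ?thesis using gap_identity[OF assms, of x] by simp
qed

abbreviation "tf x \<equiv> tree_flow V E r b T x"

lemma tf_flow: "is_bflow V E b (tf x)"
  using tf_props unfolding tfP_def by blast

lemma tf_nontree: "e \<in> E - T \<Longrightarrow> tf x e = pflow r x e"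
  using tf_props[of x] unfolding tfP_def pflow_def by blast

lemma gap_tree:
  "energy E r (tf x) - Bfun V E r b x = (1/2) * (\<Sum>e\<in>T. r e * (tf x e - pflow r x e)\<^sup>2)"
proof -
  have "(\<Sum>e\<in>E. r e * (tf x e - pflow r x e)\<^sup>2) = (\<Sum>e\<in>T. r e * (tf x e - pflow r x e)\<^sup>2)"
    by (rule sum.mono_neutral_right[OF finE TE]) (simp add: tf_nontree)
  then show ?thesis using gap_identity[OF tf_flow] by simp
qed

lemma D_tree:
  assumes "e \<in> T"
  shows "bset b (treeC T rho e) - cutflow E r x (treeC T rho e)
       = sgnC (treeC T rho e) e * (tf x e - pflow r x e)"
proof -
  let ?C = "treeC T rho e"
  have "bset b ?C = (\<Sum>v\<in>?C. net_out E (tf x) v)"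
    unfolding bset_def using tf_flow[of x] treeC_V[OF assms] unfolding is_bflow_def
    by (auto intro!: sum.cong)
  also have "\<dots> = (\<Sum>e'\<in>cut E ?C. if fst e' \<in> ?C then tf x e' else - tf x e')"
    by (rule cut_sum[OF finE treeC_fin[OF assms]])
  finally have 1: "bset b ?C = \<dots>" .
  have 2: "cutflow E r x ?C = (\<Sum>e'\<in>cut E ?C. if fst e' \<in> ?C then pflow r x e' else - pflow r x e')"
    unfolding cutflow_def pflow_def by (rule sum.cong) (auto simp: divide_inverse algebra_simps)
  have "bset b ?C - cutflow E r x ?C =
      (\<Sum>e'\<in>cut E ?C. if fst e' \<in> ?C then tf x e' - pflow r x e' else - (tf x e' - pflow r x e'))"
    unfolding 1 2 sum_subtractf[symmetric] by (rule sum.cong) auto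
  also have "\<dots> = (if fst e \<in> ?C then tf x e - pflow r x e else - (tf x e - pflow r x e))"
    by (rule cut_single[OF assms]) (simp add: tf_nontree)
  finally show ?thesis unfolding sgnC_def by simp
qed

lemma B_shift:
  assumes "C \<subseteq> V"
  shows "Bfun V E r b (\<lambda>v. x v + (if v \<in> C then \<alpha> else 0)) =
     Bfun V E r b x + \<alpha> * (bset b C - cutflow E r x C) - (1/2) * \<alpha>\<^sup>2 * (\<Sum>e\<in>cut E C. 1 / r e)"
proof -
  have fC: "finite C" using assms finV finite_subset by blast
  define ind where "ind v = (if v \<in> C then (1::real) else 0)" for v
  have ind01: "ind v = 0 \<or> ind v = 1" for v unfolding ind_def by auto
  have s1: "(\<Sum>v\<in>V. b v * (x v + \<alpha> * ind v)) = (\<Sum>v\<in>V. b v * x v) + \<alpha> * bset b C"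
  proof -
    have "(\<Sum>v\<in>V. b v * (\<alpha> * ind v)) = (\<Sum>v\<in>V. if v \<in> C then \<alpha> * b v else 0)"
      by (rule sum.cong) (auto simp: ind_def)
    also have "\<dots> = (\<Sum>v\<in>{v\<in>V. v \<in> C}. \<alpha> * b v)" by (rule sum.inter_filter[OF finV, symmetric])
    also have "{v\<in>V. v \<in> C} = C" using assms by auto
    finally show ?thesis unfolding bset_def by (simp add: distrib_left sum.distrib sum_distrib_left)
  qed
  have key: "(\<lambda>v. x v + (if v \<in> C then \<alpha> else 0)) = (\<lambda>v. x v + \<alpha> * ind v)" unfolding ind_def by auto
  have pe: "(1 / r e) * ((x (fst e) + \<alpha> * ind (fst e)) - (x (snd e) + \<alpha> * ind (snd e)))\<^sup>2
     = (1 / r e) * (x (fst e) - x (snd e))\<^sup>2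
       + 2 * \<alpha> * (if (fst e \<in> C) \<noteq> (snd e \<in> C) then (if fst e \<in> C then x (fst e) - x (snd e) else x (snd e) - x (fst e)) / r e else 0)
       + \<alpha>\<^sup>2 * (if (fst e \<in> C) \<noteq> (snd e \<in> C) then 1 / r e else 0)" for e
  proof -
    have "(x (fst e) + \<alpha> * ind (fst e)) - (x (snd e) + \<alpha> * ind (snd e)) = (x (fst e) - x (snd e)) + \<alpha> * (ind (fst e) - ind (snd e))"
      by (simp add: algebra_simps)
    then show ?thesis
      unfolding ind_def by (auto split: if_splits simp: divide_inverse algebra_simps power2_eq_square)
  qed
  have cs: "(\<Sum>e\<in>E. if (fst e \<in> C) = (snd e \<notin> C) then g e else 0) = (\<Sum>e\<in>cut E C. g e)" for g :: "_ \<Rightarrow> real"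
  proof -
    have "cut E C = {e\<in>E. (fst e \<in> C) = (snd e \<notin> C)}" unfolding cut_def by auto
    then show ?thesis by (simp add: sum.inter_filter[OF finE])
  qed
  have s2: "Lnorm2 E r (\<lambda>v. x v + \<alpha> * ind v) = Lnorm2 E r x + 2 * \<alpha> * cutflow E r x C + \<alpha>\<^sup>2 * (\<Sum>e\<in>cut E C. 1 / r e)"
    unfolding Lnorm2_def pe sum.distrib cutflow_def
    by (simp add: sum_distrib_left[symmetric] cs)
  show ?thesis unfolding key Bfun_def s2 using s1 unfolding key by (simp add: algebra_simps)
qed

lemma cutsum_pos:
  assumes "e \<in> T" shows "(\<Sum>e'\<in>cut E (treeC T rho e). 1 / r e') \<ge> 1 / r e" "1 / r e > 0"
proof -
  have eE: "e \<in> E" using assms TE by blast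
  show "1 / r e > 0" using rpos eE by simp
  show "(\<Sum>e'\<in>cut E (treeC T rho e). 1 / r e') \<ge> 1 / r e"
    by (rule member_le_sum[OF e_in_cut[OF assms] _ cut_fin]) (use rpos in \<open>auto simp: cut_def less_imp_le\<close>)
qed

lemma step_gain:
  assumes "e \<in> T"
  shows "Bfun V E r b (dkosz_step E r b T rho x e) - Bfun V E r b x =
    (1/2) * (bset b (treeC T rho e) - cutflow E r x (treeC T rho e))\<^sup>2 * Rcut E r (treeC T rho e)"
proof -
  let ?C = "treeC T rho e"
  define D where "D = bset b ?C - cutflow E r x ?C"
  define s where "s = (\<Sum>e'\<in>cut E ?C. 1 / r e')"
  have spos: "s > 0" using cutsum_pos[OF assms] unfolding s_def by linarith
  have R: "Rcut E r ?C = 1 / s" unfolding Rcut_def s_def ..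
  have st: "dkosz_step E r b T rho x e = (\<lambda>v. x v + (if v \<in> ?C then D * (1/s) else 0))"
    unfolding dkosz_step_def Let_def D_def R by auto
  show ?thesis
    unfolding st B_shift[OF treeC_V[OF assms]] D_def[symmetric] s_def[symmetric] R
    using spos by (simp add: field_simps power2_eq_square)
qed

end



context tsetting begin

abbreviation "tauT \<equiv> tau E r T rho"
abbreviation "pe e \<equiv> prob_edge E r T rho e"
abbreviation "stp x e \<equiv> dkosz_step E r b T rho x e"
abbreviation "BF x \<equiv> Bfun V E r b x"
abbreviation "EXP k g x \<equiv> dkosz_expect E r b T rho k g x"

lemma Rcut_eq: "e \<in> T \<Longrightarrow> Rcut E r (treeC T rho e) = 1 / (\<Sum>e'\<in>cut E (treeC T rho e). 1 / r e')"
  unfolding Rcut_def ..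

lemma Rpos: assumes "e \<in> T" shows "Rcut E r (treeC T rho e) > 0"
proof -
  have "(\<Sum>e'\<in>cut E (treeC T rho e). 1 / r e') > 0" using cutsum_pos[OF assms] by linarith
  then show ?thesis unfolding Rcut_def by simp
qed

lemma term_ge1:
  assumes "e \<in> T" shows "r e / Rcut E r (treeC T rho e) \<ge> 1"
proof -
  define s where "s = (\<Sum>e'\<in>cut E (treeC T rho e). 1 / r e')"
  have s: "s \<ge> 1 / r e" "1 / r e > 0" using cutsum_pos[OF assms] unfolding s_def by auto
  have re: "r e > 0" using s(2) by (simp add: zero_less_divide_iff)
  have "r e / Rcut E r (treeC T rho e) = r e * s" unfolding Rcut_def s_def[symmetric] by simp
  also have "\<dots> \<ge> r e * (1 / r e)" using s re by (intro mult_left_mono) auto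
  also have "r e * (1 / r e) = 1" using re by simp
  finally show ?thesis by simp
qed

lemma term_nonneg: "e \<in> T \<Longrightarrow> r e / Rcut E r (treeC T rho e) \<ge> 0"
  using term_ge1 by (meson order_trans zero_le_one)

lemma tau_nonneg: "tauT \<ge> 0"
  unfolding tau_def using term_nonneg by (simp add: sum_nonneg)

lemma tau_ge1: assumes "T \<noteq> {}" shows "tauT \<ge> 1"
proof -
  obtain e where e: "e \<in> T" using assms by blast
  have "r e / Rcut E r (treeC T rho e) \<le> tauT"
    unfolding tau_def by (rule member_le_sum[OF e _ finT]) (use term_nonneg in auto)
  then show ?thesis using term_ge1[OF e] by simp
qed

lemma p_nonneg: "e \<in> T \<Longrightarrow> pe e \<ge> 0"
  unfolding prob_edge_def using tau_nonneg term_nonneg[of e] by (intro mult_nonneg_nonneg) auto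

lemma p_sum: assumes "T \<noteq> {}" shows "(\<Sum>e\<in>T. pe e) = 1"
proof -
  have "(\<Sum>e\<in>T. pe e) = (1 / tauT) * tauT"
    unfolding prob_edge_def tau_def by (simp add: sum_distrib_left)
  then show ?thesis using tau_ge1[OF assms] by simp
qed

lemma exp_gain:
  assumes "T \<noteq> {}"
  shows "(\<Sum>e\<in>T. pe e * (BF (stp x e) - BF x)) = (energy E r (tf x) - BF x) / tauT"
proof -
  have "pe e * (BF (stp x e) - BF x) = (1 / tauT) * ((1/2) * (r e * (tf x e - pflow r x e)\<^sup>2))" if e: "e \<in> T" for e
  proof -
    have R: "Rcut E r (treeC T rho e) > 0" using Rpos[OF e] .
    have sg: "(sgnC (treeC T rho e) e)\<^sup>2 = 1" unfolding sgnC_def by simp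
    show ?thesis
      unfolding prob_edge_def step_gain[OF e] D_tree[OF e] power_mult_distrib sg
      using R by (simp add: field_simps)
  qed
  then have "(\<Sum>e\<in>T. pe e * (BF (stp x e) - BF x)) = (\<Sum>e\<in>T. (1 / tauT) * ((1/2) * (r e * (tf x e - pflow r x e)\<^sup>2)))"
    by (rule sum.cong[OF refl])
  also have "\<dots> = (1 / tauT) * ((1/2) * (\<Sum>e\<in>T. r e * (tf x e - pflow r x e)\<^sup>2))"
    by (simp add: sum_distrib_left)
  also have "\<dots> = (energy E r (tf x) - BF x) / tauT" unfolding gap_tree by simp
  finally show ?thesis .
qed

lemma EX_affine:
  assumes "T \<noteq> {}"
  shows "EXP k (\<lambda>x. a + c * g x) x0 = a + c * EXP k g x0"
proof (induction k arbitrary: x0)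
  case 0 then show ?case by simp
next
  case (Suc k)
  have "EXP (Suc k) (\<lambda>x. a + c * g x) x0 = (\<Sum>e\<in>T. pe e * (a + c * EXP k g (stp x0 e)))"
    using Suc by simp
  also have "\<dots> = a * (\<Sum>e\<in>T. pe e) + c * (\<Sum>e\<in>T. pe e * EXP k g (stp x0 e))"
    by (simp add: sum.distrib sum_distrib_left algebra_simps)
  also have "\<dots> = a + c * EXP (Suc k) g x0" using p_sum[OF assms] by simp
  finally show ?case .
qed

lemma EX_mono:
  assumes "\<And>x. g x \<le> h x"
  shows "EXP k g x0 \<le> EXP k h x0"
proof (induction k arbitrary: x0)
  case 0 then show ?case using assms by simp
next
  case (Suc k)
  show ?case unfolding dkosz_expect.simps
    by (rule sum_mono) (use Suc p_nonneg in \<open>auto intro: mult_left_mono\<close>)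
qed

lemma EX_contract:
  assumes "q \<ge> 0" "\<And>x. (\<Sum>e\<in>T. pe e * \<Phi> (stp x e)) \<le> q * \<Phi> x"
  shows "EXP k \<Phi> x0 \<le> q ^ k * \<Phi> x0"
proof (induction k arbitrary: x0)
  case 0 then show ?case by simp
next
  case (Suc k)
  have "EXP (Suc k) \<Phi> x0 = (\<Sum>e\<in>T. pe e * EXP k \<Phi> (stp x0 e))" by simp
  also have "\<dots> \<le> (\<Sum>e\<in>T. pe e * (q ^ k * \<Phi> (stp x0 e)))"
    by (rule sum_mono) (use Suc p_nonneg in \<open>auto intro: mult_left_mono\<close>)
  also have "\<dots> = q ^ k * (\<Sum>e\<in>T. pe e * \<Phi> (stp x0 e))"
    by (simp add: sum_distrib_left algebra_simps)
  also have "\<dots> \<le> q ^ k * (q * \<Phi> x0)"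
    using assms by (intro mult_left_mono) auto
  finally show ?case by (simp add: algebra_simps)
qed

lemma B_line:
  "BF (\<lambda>v. xs v + t * d v) = BF xs + t * ((\<Sum>v\<in>V. b v * d v)
      - (\<Sum>e\<in>E. (1 / r e) * (xs (fst e) - xs (snd e)) * (d (fst e) - d (snd e))))
      - (1/2) * t\<^sup>2 * Lnorm2 E r d"
proof -
  have 1: "(\<Sum>v\<in>V. b v * (xs v + t * d v)) = (\<Sum>v\<in>V. b v * xs v) + t * (\<Sum>v\<in>V. b v * d v)"
    by (simp add: algebra_simps sum.distrib sum_distrib_left)
  have pe: "(1 / r e) * ((xs (fst e) + t * d (fst e)) - (xs (snd e) + t * d (snd e)))\<^sup>2 =
     (1 / r e) * (xs (fst e) - xs (snd e))\<^sup>2 + 2 * t * ((1 / r e) * (xs (fst e) - xs (snd e)) * (d (fst e) - d (snd e)))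
     + t\<^sup>2 * ((1 / r e) * (d (fst e) - d (snd e))\<^sup>2)" for e
    by (simp add: power2_eq_square algebra_simps)
  have 2: "Lnorm2 E r (\<lambda>v. xs v + t * d v) = Lnorm2 E r xs
      + 2 * t * (\<Sum>e\<in>E. (1 / r e) * (xs (fst e) - xs (snd e)) * (d (fst e) - d (snd e)))
      + t\<^sup>2 * Lnorm2 E r d"
    unfolding Lnorm2_def pe sum.distrib sum_distrib_left[symmetric] ..
  show ?thesis unfolding Bfun_def 1 2 by (simp add: algebra_simps)
qed

lemma quad:
  assumes opt: "\<forall>y. BF y \<le> BF xs"
  shows "BF x = BF xs - (1/2) * Lnorm2 E r (\<lambda>v. xs v - x v)"
proof -
  define d where "d v = x v - xs v" for v
  define l where "l = (\<Sum>v\<in>V. b v * d v) - (\<Sum>e\<in>E. (1 / r e) * (xs (fst e) - xs (snd e)) * (d (fst e) - d (snd e)))"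
  define Q where "Q = Lnorm2 E r d"
  have Q0: "Q \<ge> 0" unfolding Q_def Lnorm2_def using rpos by (intro sum_nonneg) (simp add: less_imp_le)
  have line: "BF (\<lambda>v. xs v + t * d v) = BF xs + t * l - (1/2) * t\<^sup>2 * Q" for t
    unfolding l_def Q_def by (rule B_line)
  have l0: "l = 0"
  proof (rule ccontr)
    assume ln: "l \<noteq> 0"
    define t where "t = l / (Q + 1)"
    have "t * l - (1/2) * t\<^sup>2 * Q \<le> 0" using opt[rule_format, of "\<lambda>v. xs v + t * d v"] line[of t] by linarith
    moreover have "t * l - (1/2) * t\<^sup>2 * Q > 0"
    proof -
      define u where "u = Q + 1"
      have u0: "u > 0" using Q0 unfolding u_def by linarith
      have ut: "u * t = l" unfolding t_def u_def[symmetric] using u0 by simp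
      have "u\<^sup>2 * (t * l - (1/2) * t\<^sup>2 * Q) = (u * t) * l * u - (1/2) * (u * t)\<^sup>2 * Q"
        by (simp add: power2_eq_square algebra_simps)
      also have "\<dots> = l * l * u - (1/2) * l\<^sup>2 * Q" unfolding ut by (simp add: power2_eq_square)
      also have "\<dots> = l\<^sup>2 * (Q/2 + 1)" unfolding u_def by (simp add: power2_eq_square algebra_simps)
      also have "\<dots> > 0" using ln Q0 by (intro mult_pos_pos) auto
      finally have "u\<^sup>2 * (t * l - (1/2) * t\<^sup>2 * Q) > 0" .
      then show ?thesis using u0 by (simp add: zero_less_mult_iff)
    qed
    ultimately show False by linarith
  qed
  have "BF x = BF (\<lambda>v. xs v + 1 * d v)" unfolding d_def by simp
  also have "\<dots> = BF xs - (1/2) * Q" using line[of 1] l0 by simp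
  also have "Q = Lnorm2 E r (\<lambda>v. xs v - x v)"
    unfolding Q_def Lnorm2_def d_def by (rule sum.cong) (auto simp: power2_eq_square algebra_simps)
  finally show ?thesis .
qed

end



lemma rate:
  fixes tau eps :: real and K :: nat
  assumes t1: "tau \<ge> 1" and e0: "eps > 0" and K: "K = nat \<lceil>tau * ln (tau / eps)\<rceil>"
  shows "(1 - 1 / tau) ^ K \<le> eps / tau"
proof -
  have t0: "tau > 0" using t1 by linarith
  have q0: "0 \<le> 1 - 1 / tau" using t1 by (simp add: field_simps)
  have "1 - 1 / tau \<le> exp (- (1 / tau))" using exp_ge_add_one_self[of "- (1 / tau)"] by simp
  then have "(1 - 1 / tau) ^ K \<le> exp (- (1 / tau)) ^ K" using q0 by (intro power_mono) auto
  also have "\<dots> = exp (real K * (- (1 / tau)))" by (rule exp_of_nat_mult[symmetric])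
  also have "\<dots> \<le> exp (ln (eps / tau))"
  proof -
    have "real K \<ge> tau * ln (tau / eps)"
    proof -
      have "tau * ln (tau / eps) \<le> of_int \<lceil>tau * ln (tau / eps)\<rceil>" by simp
      also have "\<dots> \<le> real (nat \<lceil>tau * ln (tau / eps)\<rceil>)" by simp
      finally show ?thesis using K by simp
    qed
    then have "real K / tau \<ge> ln (tau / eps)" using t0 by (simp add: field_simps)
    moreover have "ln (eps / tau) = - ln (tau / eps)" using t0 e0 by (simp add: ln_div)
    ultimately have "real K * (- (1 / tau)) \<le> ln (eps / tau)" by simp
    then show ?thesis by simp
  qed
  also have "\<dots> = eps / tau" using t0 e0 by simp
  finally show ?thesis .
qed

context tsetting begin

lemma BF0: "BF (\<lambda>v. 0) = 0" unfolding Bfun_def Lnorm2_def by simp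

lemma contract_step:
  assumes ne: "T \<noteq> {}" and opt: "\<forall>y. BF y \<le> BF xs"
  shows "(\<Sum>e\<in>T. pe e * (BF xs - BF (stp x e))) \<le> (1 - 1 / tauT) * (BF xs - BF x)"
proof -
  have t1: "tauT \<ge> 1" using tau_ge1[OF ne] .
  have "(\<Sum>e\<in>T. pe e * (BF xs - BF (stp x e))) = (\<Sum>e\<in>T. pe e) * (BF xs - BF x) - (\<Sum>e\<in>T. pe e * (BF (stp x e) - BF x))"
  proof -
    have "(\<Sum>e\<in>T. pe e * (BF xs - BF (stp x e))) = (\<Sum>e\<in>T. pe e * (BF xs - BF x) - pe e * (BF (stp x e) - BF x))"
      by (rule sum.cong) (auto simp: algebra_simps)
    also have "\<dots> = (\<Sum>e\<in>T. pe e * (BF xs - BF x)) - (\<Sum>e\<in>T. pe e * (BF (stp x e) - BF x))"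
      by (rule sum_subtractf)
    finally show ?thesis by (simp add: sum_distrib_right)
  qed
  also have "\<dots> = (BF xs - BF x) - (energy E r (tf x) - BF x) / tauT"
    unfolding p_sum[OF ne] exp_gain[OF ne] by simp
  also have "\<dots> \<le> (BF xs - BF x) - (BF xs - BF x) / tauT"
  proof -
    have "BF xs \<le> energy E r (tf x)" by (rule weak_duality[OF tf_flow])
    then have "(BF xs - BF x) / tauT \<le> (energy E r (tf x) - BF x) / tauT"
      using t1 by (intro divide_right_mono) auto
    then show ?thesis by linarith
  qed
  also have "\<dots> = (1 - 1 / tauT) * (BF xs - BF x)" by (simp add: algebra_simps diff_divide_distrib)
  finally show ?thesis .
qed

lemma energy_bound:
  assumes ne: "T \<noteq> {}" and opt: "\<forall>y. BF y \<le> BF xs"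
  shows "energy E r (tf x) \<le> BF xs + (tauT - 1) * (BF xs - BF x)"
proof -
  have t1: "tauT \<ge> 1" using tau_ge1[OF ne] .
  have "(energy E r (tf x) - BF x) / tauT = (\<Sum>e\<in>T. pe e * (BF (stp x e) - BF x))"
    using exp_gain[OF ne] by simp
  also have "\<dots> \<le> (\<Sum>e\<in>T. pe e * (BF xs - BF x))"
    by (rule sum_mono) (use opt p_nonneg in \<open>auto intro: mult_left_mono\<close>)
  also have "\<dots> = BF xs - BF x" using p_sum[OF ne] by (simp add: sum_distrib_right[symmetric])
  finally have "(energy E r (tf x) - BF x) / tauT \<le> BF xs - BF x" .
  then have "energy E r (tf x) - BF x \<le> tauT * (BF xs - BF x)" using t1 by (simp add: field_simps)
  then show ?thesis by (simp add: algebra_simps)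
qed

end



theorem theorem1:
  fixes V :: "'v set" and E T :: "('v \<times> 'v) set" and r :: "'v \<times> 'v \<Rightarrow> real"
    and b xstar :: "'v \<Rightarrow> real" and fstar :: "'v \<times> 'v \<Rightarrow> real"
    and rho :: 'v and \<epsilon> :: real and K :: nat
  assumes finV: "finite V"
    and EV: "E \<subseteq> V \<times> V"
    and noloop: "\<forall>e\<in>E. fst e \<noteq> snd e"
    and orient: "\<forall>e\<in>E. (snd e, fst e) \<notin> E"
    and conn: "connected_on V E"
    and rpos: "\<forall>e\<in>E. r e > 0"
    and bsum: "(\<Sum>v\<in>V. b v) = 0"
    and tree: "spanning_tree V E T"
    and root: "rho \<in> V"
    and eps: "\<epsilon> > 0"
    and xopt: "\<forall>x. Bfun V E r b x \<le> Bfun V E r b xstar"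
    and fflow: "is_bflow V E b fstar"
    and fopt: "\<forall>f. is_bflow V E b f \<longrightarrow> energy E r fstar \<le> energy E r f"
    and K: "K = nat \<lceil>tau E r T rho * ln (tau E r T rho / \<epsilon>)\<rceil>"
  shows "dkosz_expect E r b T rho K (\<lambda>x. Lnorm2 E r (\<lambda>v. xstar v - x v)) (\<lambda>v. 0)
           \<le> \<epsilon> / tau E r T rho * Lnorm2 E r xstar
       \<and> dkosz_expect E r b T rho K (\<lambda>x. energy E r (tree_flow V E r b T x)) (\<lambda>v. 0)
           \<le> (1 + \<epsilon>) * energy E r fstar"
proof -
  interpret tsetting V E T r b rho
    using finV EV rpos bsum tree by unfold_locales
  show ?thesis
  proof (cases "T = {}")
    case True
    have "E = {}"
    proof (rule ccontr)
      assume "E \<noteq> {}"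
      then obtain e where e: "e \<in> E" by blast
      have "fst e \<in> V" "snd e \<in> V" using e EV by auto
      then have "reach T (fst e) (snd e)" by (rule connT)
      then have "fst e = snd e" using True by (simp add: reach_empty)
      then show False using noloop e by blast
    qed
    moreover have "tau E r T rho = 0" using True unfolding tau_def by simp
    ultimately have "K = 0" using K by simp
    then show ?thesis using \<open>E = {}\<close> by (simp add: Lnorm2_def energy_def)
  next
    case ne: False
    define xs where "xs = xstar"
    have opt: "\<forall>y. BF y \<le> BF xs" using xopt unfolding xs_def by blast
    define \<Phi> where "\<Phi> x = BF xs - BF x" for x
    define q where "q = 1 - 1 / tauT"
    have t1: "tauT \<ge> 1" using tau_ge1[OF ne] .
    have q0: "q \<ge> 0" unfolding q_def using t1 by (simp add: field_simps)
    have qK: "q ^ K \<le> \<epsilon> / tauT" unfolding q_def by (rule rate[OF t1 eps K])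
    have cstep: "(\<Sum>e\<in>T. pe e * \<Phi> (stp x e)) \<le> q * \<Phi> x" for x
      unfolding \<Phi>_def q_def by (rule contract_step[OF ne opt])
    have EPhi: "EXP K \<Phi> (\<lambda>v. 0) \<le> q ^ K * \<Phi> (\<lambda>v. 0)"
      by (rule EX_contract[OF q0 cstep])
    have Phi0: "\<Phi> (\<lambda>v. 0) = BF xs" unfolding \<Phi>_def BF0 by simp
    have BFxs: "BF xs = (1/2) * Lnorm2 E r xs"
      using quad[OF opt, of "\<lambda>v. 0"] unfolding BF0 by simp
    have L0: "Lnorm2 E r xs \<ge> 0" unfolding Lnorm2_def using rpos by (intro sum_nonneg) (simp add: less_imp_le)
    have BF0le: "BF xs \<ge> 0" using BFxs L0 by simp
    have EPhi2: "EXP K \<Phi> (\<lambda>v. 0) \<le> \<epsilon> / tauT * BF xs"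
    proof -
      have "q ^ K * \<Phi> (\<lambda>v. 0) \<le> \<epsilon> / tauT * BF xs"
        unfolding Phi0 using qK BF0le by (intro mult_right_mono) auto
      then show ?thesis using EPhi by linarith
    qed
    have part1: "EXP K (\<lambda>x. Lnorm2 E r (\<lambda>v. xs v - x v)) (\<lambda>v. 0) \<le> \<epsilon> / tauT * Lnorm2 E r xs"
    proof -
      have "(\<lambda>x. Lnorm2 E r (\<lambda>v. xs v - x v)) = (\<lambda>x. 0 + 2 * \<Phi> x)"
      proof
        fix x
        show "Lnorm2 E r (\<lambda>v. xs v - x v) = 0 + 2 * \<Phi> x"
          unfolding \<Phi>_def using quad[OF opt, of x] by simp
      qed
      then have "EXP K (\<lambda>x. Lnorm2 E r (\<lambda>v. xs v - x v)) (\<lambda>v. 0) = 0 + 2 * EXP K \<Phi> (\<lambda>v. 0)"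
        using EX_affine[OF ne, of K 0 2 \<Phi>] by simp
      also have "\<dots> \<le> 2 * (\<epsilon> / tauT * BF xs)" using EPhi2 by simp
      also have "\<dots> = \<epsilon> / tauT * Lnorm2 E r xs" using BFxs by simp
      finally show ?thesis .
    qed
    have part2: "EXP K (\<lambda>x. energy E r (tf x)) (\<lambda>v. 0) \<le> (1 + \<epsilon>) * energy E r fstar"
    proof -
      have "EXP K (\<lambda>x. energy E r (tf x)) (\<lambda>v. 0) \<le> EXP K (\<lambda>x. BF xs + (tauT - 1) * \<Phi> x) (\<lambda>v. 0)"
        by (rule EX_mono) (use energy_bound[OF ne opt] in \<open>simp add: \<Phi>_def\<close>)
      also have "\<dots> = BF xs + (tauT - 1) * EXP K \<Phi> (\<lambda>v. 0)" by (rule EX_affine[OF ne])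
      also have "\<dots> \<le> BF xs + (tauT - 1) * (\<epsilon> / tauT * BF xs)"
        using EPhi2 t1 by (intro add_left_mono mult_left_mono) auto
      also have "\<dots> \<le> BF xs + \<epsilon> * BF xs"
      proof -
        have "(tauT - 1) * (\<epsilon> / tauT) \<le> \<epsilon>" using t1 eps by (simp add: field_simps)
        then have "(tauT - 1) * (\<epsilon> / tauT) * BF xs \<le> \<epsilon> * BF xs" using BF0le by (intro mult_right_mono) auto
        then show ?thesis by (simp add: algebra_simps)
      qed
      also have "\<dots> = (1 + \<epsilon>) * BF xs" by (simp add: algebra_simps)
      also have "\<dots> \<le> (1 + \<epsilon>) * energy E r fstar"
        using weak_duality[OF fflow, of xs] eps by (intro mult_left_mono) auto
      finally show ?thesis .
    qed
    show ?thesis using part1 part2 unfolding xs_def by simp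
  qed
qed


end
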